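(* Let $n,m,\delta$ be integers with $\delta \geq n$ and $\delta \geq (m+2)/2$. Then every hypergraph with $n$ vertices, $m$ edges and minimum degree at least $\delta$ is super-pancyclic.
   Context: A hypergraph $\mathcal{H}$ consists of a vertex set $V(\mathcal{H})$ and an edge set $E(\mathcal{H})$ of subsets of $V(\mathcal{H})$; the degree of a vertex is the number of edges containing it. A Berge cycle of length $\ell$ consists of $\ell$ distinct vertices $v_1,\dots,v_\ell$ (its base vertices) and $\ell$ distinct edges $e_1,\dots,e_\ell$ with $v_i,v_{i+1}\in e_i$ (indices mod $\ell$). $\mathcal{H}$ is super-pancyclic if for every $A \subseteq V(\mathcal{H})$ with $|A|\geq 3$, $\mathcal{H}$ has a Berge cycle whose set of base vertices is exactly $A$. *)

theory Defs
  imports Main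
begin

definition hypergraph :: "'a set \<Rightarrow> 'a set set \<Rightarrow> bool" where
  "hypergraph V E \<longleftrightarrow> finite V \<and> (\<forall>e\<in>E. e \<subseteq> V)"

definition hdegree :: "'a set set \<Rightarrow> 'a \<Rightarrow> nat" where
  "hdegree E v = card {e \<in> E. v \<in> e}"

definition berge_cycle :: "'a set \<Rightarrow> 'a set set \<Rightarrow> 'a list \<Rightarrow> 'a set list \<Rightarrow> bool" where
  "berge_cycle V E vs es \<longleftrightarrow>
     length es = length vs \<and> distinct vs \<and> distinct es \<and>
     set vs \<subseteq> V \<and> set es \<subseteq> E \<and>
     (\<forall>i < length vs. vs ! i \<in> es ! i \<and> vs ! ((i + 1) mod length vs) \<in> es ! i)"

definition super_pancyclic :: "'a set \<Rightarrow> 'a set set \<Rightarrow> bool" where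
  "super_pancyclic V E \<longleftrightarrow>
     (\<forall>A. A \<subseteq> V \<and> card A \<ge> 3 \<longrightarrow> (\<exists>vs es. berge_cycle V E vs es \<and> set vs = A))"

end

theory Submission imports Defs begin

fun bpath :: "'a list \<Rightarrow> 'a set list \<Rightarrow> bool" where
  "bpath [v] [] = True"
| "bpath (u # v # vs) (e # es) = (u \<in> e \<and> v \<in> e \<and> bpath (v # vs) es)"
| "bpath _ _ = False"

lemma bpath_len: "bpath W es \<Longrightarrow> length W = Suc (length es)"
  by (induction W es rule: bpath.induct) auto

lemma bpath_nth: "bpath W es \<Longrightarrow> i < length es \<Longrightarrow> W ! i \<in> es ! i \<and> W ! Suc i \<in> es ! i"
proof (induction W es arbitrary: i rule: bpath.induct)
  case (2 u v vs e es)
  then show ?case by (cases i) auto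
qed auto

lemma bpath_join: "bpath P es1 \<Longrightarrow> bpath Q es2 \<Longrightarrow> last P = hd Q \<Longrightarrow> bpath (P @ tl Q) (es1 @ es2)"
proof (induction P es1 rule: bpath.induct)
  case (1 v)
  then show ?case by (cases Q) auto
qed auto

lemma bpath_split: "bpath (P @ Q) (es1 @ e # es2) \<Longrightarrow> length P = Suc (length es1) \<Longrightarrow>
   bpath P es1 \<and> last P \<in> e \<and> hd Q \<in> e \<and> bpath Q es2"
proof (induction es1 arbitrary: P)
  case Nil
  then obtain p where P: "P = [p]" by (cases P) auto
  with Nil show ?case by (cases Q) auto
next
  case (Cons e1 es1)
  then obtain p P' where P: "P = p # P'" by (cases P) auto
  with Cons obtain q P'' where P': "P' = q # P''" by (cases P') auto
  have "bpath (P' @ Q) (es1 @ e # es2)" using Cons.prems P P' by simp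
  from Cons.IH[OF this] Cons.prems P P' show ?case by simp
qed

lemma bpath_rev: "bpath P es \<Longrightarrow> bpath (rev P) (rev es)"
proof (induction P es rule: bpath.induct)
  case (2 u v vs e es)
  have "bpath ((rev vs @ [v]) @ tl [v, u]) (rev es @ [e])"
    by (rule bpath_join) (use 2 in auto)
  then show ?case by simp
qed auto

definition ccyc :: "'a set set \<Rightarrow> 'a list \<Rightarrow> 'a set list \<Rightarrow> bool" where
  "ccyc E W es \<longleftrightarrow> bpath W es \<and> es \<noteq> [] \<and> hd W = last W \<and> distinct (butlast W) \<and> distinct es \<and> set es \<subseteq> E"

lemma ccyc_set: assumes "ccyc E W es" shows "set (butlast W) = set W"
proof -
  have b: "bpath W es" "es \<noteq> []" "hd W = last W" using assms by (auto simp: ccyc_def)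
  have len: "length W \<ge> 2" using bpath_len[OF b(1)] b(2) by (cases es) auto
  then have ne: "butlast W \<noteq> []" by (cases W) auto
  have Wd: "W = butlast W @ [last W]" using len by (cases W) auto
  then have "set W = insert (last W) (set (butlast W))" by (metis Un_insert_right set_append set_simps sup_bot.right_neutral)
  moreover have "last W \<in> set (butlast W)" using b(3) ne Wd by (metis hd_append2 hd_in_set)
  ultimately show ?thesis by auto
qed

lemma ccyc_len: "ccyc E W es \<Longrightarrow> length (butlast W) = length es"
  by (auto simp: ccyc_def dest: bpath_len)

lemma insert_list:
  assumes c: "ccyc E W es" and W: "W = Wa @ Wb" and es: "es = esa @ e # esb"
    and l: "length Wa = Suc (length esa)"
    and x: "x \<notin> set W" and fg: "f \<in> E" "g \<in> E" "f \<noteq> g"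
    and fn: "f \<notin> set esa" "f \<notin> set esb" and gn: "g \<notin> set esa" "g \<notin> set esb"
    and adj: "last Wa \<in> f" "x \<in> f" "x \<in> g" "hd Wb \<in> g"
  shows "ccyc E (Wa @ x # Wb) (esa @ f # g # esb)"
proof -
  have b: "bpath W es" "hd W = last W" "distinct (butlast W)" "distinct es" "set es \<subseteq> E"
    using c by (auto simp: ccyc_def)
  have sp: "bpath Wa esa" "bpath Wb esb"
    using bpath_split[of Wa Wb esa e esb] b(1) W es l by auto
  have Wbne: "Wb \<noteq> []" using sp(2) bpath_len by fastforce
  have Wane: "Wa \<noteq> []" using l by auto
  have p1: "bpath (Wa @ tl [last Wa, x]) (esa @ [f])"
    by (rule bpath_join) (use sp adj in auto)
  have p2: "bpath ((Wa @ [x]) @ tl [x, hd Wb]) ((esa @ [f]) @ [g])"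
    by (rule bpath_join) (use p1 adj in auto)
  have p3: "bpath ((Wa @ [x, hd Wb]) @ tl Wb) ((esa @ [f, g]) @ esb)"
    by (rule bpath_join) (use p2 sp in auto)
  have eq: "(Wa @ [x, hd Wb]) @ tl Wb = Wa @ x # Wb" using Wbne by (cases Wb) auto
  have bl: "butlast (Wa @ x # Wb) = Wa @ x # butlast Wb" "butlast W = Wa @ butlast Wb"
    using Wbne W by (auto simp: butlast_append)
  have xW: "x \<notin> set Wa" "x \<notin> set (butlast Wb)" using x W by (auto dest: in_set_butlastD)
  show ?thesis unfolding ccyc_def
    using p3 eq bl b W Wane Wbne xW es fg fn gn by auto
qed

lemma rot_list:
  assumes c: "ccyc E W es" and W: "W = Wa @ Wb @ Wc" and es: "es = esa @ e # esb @ e' # esc"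
    and la: "length Wa = Suc (length esa)" and lb: "length Wb = Suc (length esb)"
    and x: "x \<notin> set W" and f: "f \<in> E" "f \<notin> set es"
    and adj: "x \<in> e" "x \<in> e'" "hd Wb \<in> f" "hd Wc \<in> f"
  shows "\<exists>W' es'. ccyc E W' es' \<and> length es' = Suc (length es) \<and> set W' = insert x (set W)"
proof -
  have b: "bpath W es" "hd W = last W" "distinct (butlast W)" "distinct es" "set es \<subseteq> E"
    using c by (auto simp: ccyc_def)
  have s1: "bpath Wa esa" "last Wa \<in> e" "hd (Wb @ Wc) \<in> e" "bpath (Wb @ Wc) (esb @ e' # esc)"
    using bpath_split[of Wa "Wb @ Wc" esa e "esb @ e' # esc"] b(1) W es la by auto
  have s2: "bpath Wb esb" "last Wb \<in> e'" "hd Wc \<in> e'" "bpath Wc esc"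
    using bpath_split[of Wb Wc esb e' esc] s1(4) lb by auto
  have Wcne: "Wc \<noteq> []" using s2(4) bpath_len by fastforce
  have Wane: "Wa \<noteq> []" using la by auto
  have Wbne: "Wb \<noteq> []" using lb by auto
  obtain Wa' la' where Wa: "Wa = Wa' @ [la']" using Wane by (cases Wa rule: rev_cases) auto
  obtain Wc' lc where Wc: "Wc = Wc' @ [lc]" using Wcne by (cases Wc rule: rev_cases) auto
  obtain b1 Wb' where Wb: "Wb = b1 # Wb'" using Wbne by (cases Wb) auto
  have hdW: "hd W = hd Wa" "last W = lc" using W Wane Wc by auto
  have p1: "bpath (Wb @ tl [last Wb, x]) (esb @ [e'])"
    by (rule bpath_join) (use s2 adj in auto)
  have p2: "bpath ((Wb @ [x]) @ tl [x, last Wa]) ((esb @ [e']) @ [e])"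
    by (rule bpath_join) (use p1 adj s1 in auto)
  have p3: "bpath ((Wb @ [x, last Wa]) @ tl (rev Wa)) ((esb @ [e', e]) @ rev esa)"
    by (rule bpath_join) (use p2 s1 bpath_rev[OF s1(1)] Wa in auto)
  have e3: "(Wb @ [x, last Wa]) @ tl (rev Wa) = Wb @ x # rev Wa" using Wa by simp
  have p4: "bpath ((Wb @ x # rev Wa) @ tl (rev Wc)) ((esb @ [e', e] @ rev esa) @ rev esc)"
    by (rule bpath_join) (use p3 e3 s2 bpath_rev[OF s2(4)] Wa Wc hdW b(2) Wane in \<open>auto simp: hd_rev last_rev\<close>)
  have e4: "(Wb @ x # rev Wa) @ tl (rev Wc) = Wb @ x # rev Wa @ rev Wc'" using Wc by simp
  have lst4: "last (Wb @ x # rev Wa @ rev Wc') = hd Wc"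
    using Wc Wa hdW b(2) by (cases Wc') (auto simp: last_rev)
  have p5: "bpath ((Wb @ x # rev Wa @ rev Wc') @ tl [hd Wc, hd Wb]) ((esb @ [e', e] @ rev esa @ rev esc) @ [f])"
    by (rule bpath_join) (use p4 e4 lst4 adj in auto)
  define W' where "W' = (Wb @ x # rev Wa @ rev Wc') @ [hd Wb]"
  define es' where "es' = (esb @ [e', e] @ rev esa @ rev esc) @ [f]"
  have bl: "butlast W' = Wb @ x # rev Wa @ rev Wc'" unfolding W'_def by (simp only: butlast_snoc)
  have blW: "butlast W = Wa @ Wb @ Wc'" using W Wc by (simp add: butlast_append)
  have c': "ccyc E W' es'" unfolding ccyc_def
  proof (intro conjI)
    show "bpath W' es'" using p5 unfolding W'_def es'_def by simp
    show "es' \<noteq> []" unfolding es'_def by simp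
    show "hd W' = last W'" unfolding W'_def using Wb by simp
    show "distinct (butlast W')" unfolding bl using b(3) blW x W Wc by auto
    show "distinct es'" unfolding es'_def using b(4) es f by auto
    show "set es' \<subseteq> E" unfolding es'_def using b(5) es f by auto
  qed
  have "length es' = Suc (length es)" unfolding es'_def es by simp
  moreover have "set W' = insert x (set W)"
    unfolding W'_def using W Wb Wc hdW b(2) hd_in_set[OF Wane] by auto
  ultimately show ?thesis using c' by blast
qed

lemma insert_idx:
  assumes c: "ccyc E W es" and i: "i < length es" and x: "x \<notin> set W"
    and fg: "f \<in> E" "g \<in> E" "f \<noteq> g" "f \<notin> set es - {es!i}" "g \<notin> set es - {es!i}"
    and adj: "W!i \<in> f" "x \<in> f" "x \<in> g" "W!Suc i \<in> g"
  shows "\<exists>W' es'. ccyc E W' es' \<and> length es' = Suc (length es) \<and> set W' = insert x (set W)"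
proof -
  have b: "bpath W es" "distinct es" using c by (auto simp: ccyc_def)
  have lW: "length W = Suc (length es)" using bpath_len[OF b(1)] .
  define Wa where "Wa = take (Suc i) W"
  define Wb where "Wb = drop (Suc i) W"
  define esa where "esa = take i es"
  define esb where "esb = drop (Suc i) es"
  have W: "W = Wa @ Wb" unfolding Wa_def Wb_def by simp
  have es: "es = esa @ es!i # esb" unfolding esa_def esb_def using id_take_nth_drop[OF i] .
  have l: "length Wa = Suc (length esa)" unfolding Wa_def esa_def using lW i by simp
  have lastWa: "last Wa = W ! i" unfolding Wa_def using lW i by (simp add: take_Suc_conv_app_nth)
  have hdWb: "hd Wb = W ! Suc i" unfolding Wb_def using lW i by (simp add: hd_drop_conv_nth)
  have dd: "es!i \<notin> set esa" "es!i \<notin> set esb" proof -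
    have "distinct (esa @ es!i # esb)" using b(2) es by simp
    then show "es!i \<notin> set esa" "es!i \<notin> set esb" by auto
  qed
  have sub: "set esa \<subseteq> set es" "set esb \<subseteq> set es" using es by (metis Un_upper1 set_append, metis Un_upper2 set_append set_subset_Cons subset_trans)
  have "ccyc E (Wa @ x # Wb) (esa @ f # g # esb)"
    by (rule insert_list[OF c W es l]) (use x fg adj lastWa hdWb dd sub in auto)
  moreover have "length (esa @ f # g # esb) = Suc (length es)" using es by (metis length_append length_Cons add_Suc_right)
  moreover have "set (Wa @ x # Wb) = insert x (set W)" using W by auto
  ultimately show ?thesis by blast
qed

lemma rot_idx:
  assumes c: "ccyc E W es" and ij: "i < j" "j < length es" and x: "x \<notin> set W"
    and f: "f \<in> E" "f \<notin> set es"
    and adj: "x \<in> es!i" "x \<in> es!j" "W!Suc i \<in> f" "W!Suc j \<in> f"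
  shows "\<exists>W' es'. ccyc E W' es' \<and> length es' = Suc (length es) \<and> set W' = insert x (set W)"
proof -
  have b: "bpath W es" using c by (auto simp: ccyc_def)
  have lW: "length W = Suc (length es)" using bpath_len[OF b] .
  define Wa where "Wa = take (Suc i) W"
  define Wb where "Wb = take (j - i) (drop (Suc i) W)"
  define Wc where "Wc = drop (Suc j) W"
  define esa where "esa = take i es"
  define esb where "esb = take (j - Suc i) (drop (Suc i) es)"
  define esc where "esc = drop (Suc j) es"
  have d1: "drop (j - i) (drop (Suc i) W) = drop (Suc j) W" using ij by simp
  have W: "W = Wa @ Wb @ Wc" unfolding Wa_def Wb_def Wc_def
    by (metis append_take_drop_id d1)
  have d2: "drop (j - Suc i) (drop (Suc i) es) = es!j # drop (Suc j) es"
    using ij by (simp add: Cons_nth_drop_Suc)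
  have es: "es = esa @ es!i # esb @ es!j # esc" unfolding esa_def esb_def esc_def
    by (metis append_take_drop_id d2 id_take_nth_drop ij less_trans append_Cons)
  have la: "length Wa = Suc (length esa)" unfolding Wa_def esa_def using lW ij by simp
  have lb: "length Wb = Suc (length esb)" unfolding Wb_def esb_def using lW ij by simp
  have hb: "hd Wb = W ! Suc i" unfolding Wb_def using lW ij by (simp add: hd_drop_conv_nth)
  have hc: "hd Wc = W ! Suc j" unfolding Wc_def using lW ij by (simp add: hd_drop_conv_nth)
  show ?thesis
    by (rule rot_list[OF c W es la lb x f]) (use adj hb hc in auto)
qed

lemma ccyc_berge:
  assumes c: "ccyc E W es" and V: "set W \<subseteq> V"
  shows "berge_cycle V E (butlast W) es"
proof -
  have b: "bpath W es" "es \<noteq> []" "hd W = last W" "distinct (butlast W)" "distinct es" "set es \<subseteq> E"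
    using c by (auto simp: ccyc_def)
  have lW: "length W = Suc (length es)" using bpath_len[OF b(1)] .
  have lb: "length (butlast W) = length es" using lW by simp
  have sb: "set (butlast W) \<subseteq> V" using V by (meson in_set_butlastD subset_iff)
  have idx: "butlast W ! i \<in> es ! i \<and> butlast W ! ((i + 1) mod length (butlast W)) \<in> es ! i"
    if i: "i < length (butlast W)" for i
  proof -
    have n: "W ! i \<in> es ! i" "W ! Suc i \<in> es ! i" using bpath_nth[OF b(1)] i lb by auto
    have e1: "butlast W ! i = W ! i" using i by (simp add: nth_butlast)
    have "butlast W ! ((i + 1) mod length (butlast W)) = W ! Suc i"
    proof (cases "Suc i < length es")
      case True
      then show ?thesis using lb lW by (simp add: nth_butlast)
    next
      case False
      then have si: "Suc i = length es" using i lb by simp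
      have "butlast W ! 0 = W ! 0" using lb b(2) by (simp add: nth_butlast)
      also have "\<dots> = hd W" using lW by (cases W) auto
      also have "\<dots> = last W" using b(3) .
      also have "\<dots> = W ! Suc i" using si lW by (metis diff_Suc_1 last_conv_nth list.size(3) nat.distinct(1))
      finally show ?thesis using si lb by simp
    qed
    then show ?thesis using n e1 by simp
  qed
  show ?thesis unfolding berge_cycle_def using lb b sb idx by auto
qed

theorem theorem7:
  fixes V :: "'a set" and E :: "'a set set" and n m :: nat and \<delta> :: int
  assumes "hypergraph V E"
    and "card V = n" and "card E = m"
    and "\<delta> \<ge> int n" and "2 * \<delta> \<ge> int m + 2"
    and "\<forall>v\<in>V. int (hdegree E v) \<ge> \<delta>"
  shows "super_pancyclic V E"
proof -
  obtain d :: nat where dd: "\<delta> = int d" using assms(4) by (metis of_nat_0_le_iff order_trans zero_le_imp_eq_int)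
  have fV: "finite V" and EV: "\<forall>e\<in>E. e \<subseteq> V" using assms(1) by (auto simp: hypergraph_def)
  have fE: "finite E" using fV EV by (meson Pow_iff finite_Pow_iff finite_subset subsetI)
  define N where "N v = {e \<in> E. v \<in> e}" for v
  have fN: "finite (N v)" for v unfolding N_def using fE by simp
  have NE: "N v \<subseteq> E" for v unfolding N_def by auto
  have dn: "n \<le> d" using assms(4) dd by simp
  have dm: "m + 2 \<le> 2 * d" using assms(5) dd by simp
  have deg: "d \<le> card (N v)" if "v \<in> V" for v
    using assms(6) that dd unfolding N_def hdegree_def by auto
  have common: "2 \<le> card (N u \<inter> N v)" if "u \<in> V" "v \<in> V" for u v
  proof -
    have "card (N u) + card (N v) = card (N u \<union> N v) + card (N u \<inter> N v)"
      using card_Un_Int[OF fN fN] .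
    moreover have "card (N u \<union> N v) \<le> m" using assms(3) fE NE by (metis card_mono le_sup_iff)
    ultimately show ?thesis using deg[OF that(1)] deg[OF that(2)] dm by linarith
  qed
  show ?thesis unfolding super_pancyclic_def
  proof (intro allI impI)
    fix A assume A: "A \<subseteq> V \<and> 3 \<le> card A"
    have fA: "finite A" using A fV finite_subset by blast
    have cAn: "card A \<le> n" using A fV assms(2) card_mono by blast
    define P where "P k \<longleftrightarrow> (\<exists>W es. ccyc E W es \<and> set W \<subseteq> A \<and> length es = k)" for k
    have bound: "k \<le> card A" if "P k" for k
    proof -
      obtain W es where c: "ccyc E W es" "set W \<subseteq> A" "length es = k" using \<open>P k\<close> P_def by blast
      have "distinct (butlast W)" using c by (simp add: ccyc_def)
      then have "card (set (butlast W)) = k" using ccyc_len[OF c(1)] c(3) by (simp add: distinct_card)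
      moreover have "card (set (butlast W)) \<le> card A" using ccyc_set[OF c(1)] c(2) fA card_mono by metis
      ultimately show ?thesis by simp
    qed
    have P1: "P 1"
    proof -
      obtain u where u: "u \<in> A" using A by (metis card.empty ex_in_conv not_numeral_le_zero)
      have "0 < card (N u)" using deg[of u] u A cAn dn by auto
      then obtain e where e: "e \<in> N u" by (metis card.empty ex_in_conv less_irrefl)
      have "ccyc E [u, u] [e]" using e unfolding ccyc_def N_def by auto
      then show ?thesis unfolding P_def using u by (intro exI[of _ "[u,u]"] exI[of _ "[e]"]) auto
    qed
    obtain t where Pt: "P t" and tmax: "\<forall>k. P k \<longrightarrow> k \<le> t"
      using ex_has_greatest_nat[of P 1 id "Suc (card A)"] P1 bound by (auto simp: less_Suc_eq_le)
    obtain W es where c: "ccyc E W es" and WA: "set W \<subseteq> A" and lt: "length es = t"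
      using Pt P_def by blast
    have bigger: False if "\<exists>W' es'. ccyc E W' es' \<and> length es' = Suc (length es) \<and> set W' = insert x (set W)" "x \<in> A" for x
    proof -
      from that obtain W' es' where "ccyc E W' es'" "length es' = Suc t" "set W' \<subseteq> A" using WA lt by auto
      then have "P (Suc t)" unfolding P_def by blast
      then show False using tmax by fastforce
    qed
    have "A \<subseteq> set W"
    proof (rule ccontr)
      assume "\<not> A \<subseteq> set W"
      then obtain x where xA: "x \<in> A" and xW: "x \<notin> set W" by blast
      have b: "bpath W es" "es \<noteq> []" "distinct es" "set es \<subseteq> E" "distinct (butlast W)"
        using c by (auto simp: ccyc_def)
      have lW: "length W = Suc t" using bpath_len[OF b(1)] lt by simp
      have t1: "1 \<le> t" using b(2) lt by (cases es) auto
      have "card (set W) = t" using ccyc_set[OF c] b(5) ccyc_len[OF c] lt by (metis distinct_card)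
      moreover have "set W \<subset> A" using WA xA xW by blast
      ultimately have tA: "t < card A" using fA psubset_card_mono by metis
      have td: "Suc t \<le> d" using tA cAn dn by simp
      have WV: "set W \<subseteq> V" using WA A by blast
      have WiV: "W ! i \<in> V" if "i \<le> t" for i using WV lW that by (metis less_Suc_eq_le nth_mem subsetD)
      have xV: "x \<in> V" using xA A by blast
      have ces: "card (set es) = t" using b(3) lt by (simp add: distinct_card)
      define I where "I = {i. i < t \<and> x \<in> es ! i}"
      show False
      proof (cases "I = {}")
        case True
        then have xnot: "x \<notin> e" if "e \<in> set es" for e using that lt unfolding I_def by (auto simp: in_set_conv_nth)
        have "2 \<le> card (N x \<inter> N (W ! 1))" using common xV WiV t1 by simp
        then obtain g where g: "g \<in> N x \<inter> N (W ! 1)" by (metis card.empty ex_in_conv not_numeral_le_zero)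
        have "2 \<le> card (N x \<inter> N (W ! 0))" using common xV WiV by simp
        then have "card (N x \<inter> N (W ! 0) - {g}) \<ge> 1" using fN by (auto simp: card_Diff_singleton_if)
        then obtain f where f: "f \<in> N x \<inter> N (W ! 0) - {g}" by (metis card.empty ex_in_conv not_one_le_zero)
        have "\<exists>W' es'. ccyc E W' es' \<and> length es' = Suc (length es) \<and> set W' = insert x (set W)"
          by (rule insert_idx[OF c _ xW, of 0 f g]) (use f g xnot lt t1 in \<open>auto simp: N_def\<close>)
        then show False using bigger xA by blast
      next
        case False
        define Nx where "Nx = N x - set es"
        define D where "D i = N (W ! Suc i) - set es" for i
        have fI: "finite I" unfolding I_def by simp
        have h1: "Nx \<inter> D i = {}" if "i \<in> I" for i
        proof (rule ccontr)
          assume "Nx \<inter> D i \<noteq> {}"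
          then obtain g where g: "g \<in> Nx" "g \<in> D i" by blast
          have i: "i < length es" "x \<in> es ! i" using that lt unfolding I_def by auto
          have ei: "es ! i \<in> E" "W ! i \<in> es ! i" using b(4) i bpath_nth[OF b(1) i(1)] by auto
          have "\<exists>W' es'. ccyc E W' es' \<and> length es' = Suc (length es) \<and> set W' = insert x (set W)"
            by (rule insert_idx[OF c i(1) xW, of "es ! i" g]) (use g i ei in \<open>auto simp: N_def Nx_def D_def\<close>)
          then show False using bigger xA by blast
        qed
        have h2lt: "D i \<inter> D j = {}" if "i \<in> I" "j \<in> I" "i < j" for i j
        proof (rule ccontr)
          assume "D i \<inter> D j \<noteq> {}"
          then obtain f where f: "f \<in> D i" "f \<in> D j" by blast
          have ij: "j < length es" "x \<in> es ! i" "x \<in> es ! j" using that lt unfolding I_def by auto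
          have "\<exists>W' es'. ccyc E W' es' \<and> length es' = Suc (length es) \<and> set W' = insert x (set W)"
            by (rule rot_idx[OF c that(3) ij(1) xW, of f]) (use f ij in \<open>auto simp: N_def D_def\<close>)
          then show False using bigger xA by blast
        qed
        have h2: "\<forall>i\<in>I. \<forall>j\<in>I. i \<noteq> j \<longrightarrow> D i \<inter> D j = {}"
          using h2lt by (metis Int_commute linorder_neqE_nat)
        have cU: "card (\<Union> (D ` I)) = (\<Sum>i\<in>I. card (D i))"
          by (rule card_UN_disjoint[OF fI]) (use h2 fN in \<open>auto simp: D_def\<close>)
        have cDi: "d - t \<le> card (D i)" if "i \<in> I" for i
        proof -
          have "N (W ! Suc i) \<subseteq> D i \<union> set es" unfolding D_def by auto
          then have "card (N (W ! Suc i)) \<le> card (D i) + t"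
            using ces fN by (metis card_Un_le card_mono finite_Un finite_set D_def finite_Diff order_trans)
          moreover have "d \<le> card (N (W ! Suc i))" using deg WiV that unfolding I_def by simp
          ultimately show ?thesis by simp
        qed
        have sumb: "card I * (d - t) \<le> (\<Sum>i\<in>I. card (D i))"
          using sum_bounded_below[of I "d - t" "\<lambda>i. card (D i)"] cDi by simp
        have cNx: "d \<le> card Nx + card I"
        proof -
          have "N x \<subseteq> Nx \<union> (\<lambda>i. es ! i) ` I" unfolding Nx_def I_def N_def using lt
            by (auto simp: in_set_conv_nth)
          then have "card (N x) \<le> card Nx + card I"
            by (metis (no_types, lifting) card_Un_le card_image_le fI fN finite_Diff finite_Un finite_imageI Nx_def card_mono order_trans add_le_mono order_refl)
          then show ?thesis using deg[OF xV] by simp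
        qed
        have disj: "Nx \<inter> \<Union> (D ` I) = {}" using h1 by blast
        have cUn: "card (Nx \<union> \<Union> (D ` I)) = card Nx + card (\<Union> (D ` I))"
          by (rule card_Un_disjoint) (use fN fI disj in \<open>auto simp: Nx_def D_def\<close>)
        have sub: "Nx \<union> \<Union> (D ` I) \<subseteq> E - set es" unfolding Nx_def D_def using NE by blast
        have cE: "card (E - set es) = m - t" using assms(3) ces b(4) fE by (simp add: card_Diff_subset)
        have le: "card Nx + (\<Sum>i\<in>I. card (D i)) \<le> m - t"
          using card_mono[OF _ sub] fE cUn cU cE by simp
        have pI: "1 \<le> card I" using False fI by (simp add: Suc_le_eq card_gt_0_iff)
        have prod: "card I * (d - t) \<ge> (d - t) + card I - 1"
        proof -
          obtain p where p: "card I = Suc p" using pI by (cases "card I") auto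
          obtain s where s: "d - t = Suc s" using td by (cases "d - t") auto
          show ?thesis unfolding p s by simp
        qed
        show False using le sumb prod cNx dm td pI by linarith
      qed
    qed
    then have "set (butlast W) = A" using ccyc_set[OF c] WA by auto
    moreover have "berge_cycle V E (butlast W) es" using ccyc_berge[OF c] WA A by blast
    ultimately show "\<exists>vs es. berge_cycle V E vs es \<and> set vs = A" by blast
  qed
qed

end
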